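(* Let $n$ be a positive integer. Let $R_n\subseteq T_n$ be the set of triples $(A,B,C)\in T_n$ with $C$ empty, and let $D_n^0\subseteq D_n$ be the set of pairs $(H,X)\in D_n$ with $X$ on the horizontal axis. Define $r:R_n\to D_n^0$ by $r(A,B,\emptyset)=(H,X)$, where $H$ is the concatenation of $A$ and $B$ and $X$ is the point at which $A$ and $B$ meet. Then $r$ is a bijection.
   Context: A lattice path here is a finite (possibly empty) sequence of steps, each an up step $(1,1)$ or a down step $(1,-1)$, drawn as a polygonal line from a given starting lattice point; its lattice points are its starting point and the endpoints of its steps. $T_n$ is the set of ordered triples $(A,B,C)$ of lattice paths such that for some nonnegative integers $i,j,k$ with $i+j+k=n$, $A$ has $i$ up and $i$ down steps, $B$ has $j$ up and $j$ down steps, and $C$ has $k$ up and $k$ down steps. $D_n$ is the set of pairs $(H,X)$ where $H$ is a lattice path with $n$ up steps and $n$ down steps drawn from $(0,0)$ to $(2n,0)$ and $X$ is one of the $2n+1$ lattice points of $H$. The concatenation of paths is obtained by drawing them successively, each starting at the endpoint of the preceding one, the first starting at $(0,0)$. *)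

theory Defs
  imports Main
begin

datatype step = Up | Down

type_synonym lpath = "step list"
type_synonym point = "int \<times> int"

fun step_vec :: "step \<Rightarrow> point" where
  "step_vec Up = (1, 1)"
| "step_vec Down = (1, -1)"

fun endpt :: "point \<Rightarrow> lpath \<Rightarrow> point" where
  "endpt p [] = p"
| "endpt (x, y) (s # xs) = endpt (x + fst (step_vec s), y + snd (step_vec s)) xs"

definition lattice_points :: "point \<Rightarrow> lpath \<Rightarrow> point set" where
  "lattice_points p xs = {endpt p (take m xs) | m. m \<le> length xs}"

definition ups :: "lpath \<Rightarrow> nat" where "ups xs = length (filter (\<lambda>s. s = Up) xs)"
definition downs :: "lpath \<Rightarrow> nat" where "downs xs = length (filter (\<lambda>s. s = Down) xs)"

definition T :: "nat \<Rightarrow> (lpath \<times> lpath \<times> lpath) set" where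
  "T n = {(A, B, C). \<exists>i j k. i + j + k = n \<and> ups A = i \<and> downs A = i
            \<and> ups B = j \<and> downs B = j \<and> ups C = k \<and> downs C = k}"

definition D :: "nat \<Rightarrow> (lpath \<times> point) set" where
  "D n = {(H, X). ups H = n \<and> downs H = n \<and> endpt (0, 0) H = (2 * int n, 0)
            \<and> X \<in> lattice_points (0, 0) H}"

definition R :: "nat \<Rightarrow> (lpath \<times> lpath \<times> lpath) set" where
  "R n = {(A, B, C) \<in> T n. C = []}"

definition D0 :: "nat \<Rightarrow> (lpath \<times> point) set" where
  "D0 n = {(H, X) \<in> D n. snd X = 0}"

text \<open>Concatenation A then B (A from (0,0), B from A's endpoint) is the step list A @ B;
  the meeting point is the endpoint of A.\<close>
definition r :: "lpath \<times> lpath \<times> lpath \<Rightarrow> lpath \<times> point" where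
  "r t = (case t of (A, B, C) \<Rightarrow> (A @ B, endpt (0, 0) A))"

end

theory Submission
  imports Defs
begin

lemma ups_simps[simp]: "ups [] = 0" "ups (s # xs) = (if s = Up then 1 else 0) + ups xs"
  "ups (xs @ ys) = ups xs + ups ys"
  by (auto simp: ups_def)

lemma downs_simps[simp]: "downs [] = 0" "downs (s # xs) = (if s = Down then 1 else 0) + downs xs"
  "downs (xs @ ys) = downs xs + downs ys"
  by (auto simp: downs_def)

lemma len_ud: "length xs = ups xs + downs xs"
  apply (induction xs) apply simp
  subgoal for a xs by (cases a) auto
  done

lemma endpt_formula:
  "endpt (x, y) xs = (x + int (length xs), y + int (ups xs) - int (downs xs))"
proof (induction xs arbitrary: x y)
  case Nil then show ?case by simp
next
  case (Cons a xs) then show ?case by (cases a) auto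
qed

lemma endpt0: "endpt (0,0) xs = (int (length xs), int (ups xs) - int (downs xs))"
  using endpt_formula[of 0 0 xs] by simp

theorem proposition1:
  fixes n :: nat
  assumes "n > 0"
  shows "bij_betw r (R n) (D0 n)"
proof (rule bij_betw_imageI)
  show "inj_on r (R n)"
  proof (rule inj_onI)
    fix t t' assume t: "t \<in> R n" "t' \<in> R n" and e: "r t = r t'"
    obtain A B where tt: "t = (A, B, [])" using t by (auto simp: R_def)
    from t(2) obtain A' B' where tt': "t' = (A', B', [])" unfolding R_def by blast
    have "A @ B = A' @ B'" "endpt (0,0) A = endpt (0,0) A'" using e by (auto simp: r_def tt tt')
    then have "A @ B = A' @ B'" "length A = length A'" by (auto simp: endpt0)
    then show "t = t'" by (auto simp: tt tt' append_eq_append_conv)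
  qed
next
  show "r ` R n = D0 n"
  proof
    show "r ` R n \<subseteq> D0 n"
    proof
      fix z assume "z \<in> r ` R n"
      then obtain A B i j where z: "z = (A @ B, endpt (0,0) A)" and
        h: "i + j = n" "ups A = i" "downs A = i" "ups B = j" "downs B = j"
        by (auto simp: R_def T_def r_def)
      have "endpt (0,0) A = endpt (0,0) (take (length A) (A @ B))" by simp
      then have "endpt (0,0) A \<in> lattice_points (0,0) (A @ B)"
        unfolding lattice_points_def by (intro CollectI exI[of _ "length A"]) simp
      moreover have "length (A @ B) = 2 * n" using h len_ud[of A] len_ud[of B] by simp
      ultimately show "z \<in> D0 n" using h
        by (auto simp: z D0_def D_def endpt0)
    qed
  next
    show "D0 n \<subseteq> r ` R n"
    proof
      fix z assume "z \<in> D0 n"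
      then obtain H X where z: "z = (H, X)" and h: "ups H = n" "downs H = n"
        and X: "X \<in> lattice_points (0,0) H" and s: "snd X = 0"
        by (auto simp: D0_def D_def)
      obtain m where m: "m \<le> length H" "X = endpt (0,0) (take m H)"
        using X by (auto simp: lattice_points_def)
      have HAB: "H = take m H @ drop m H" by simp
      have uA: "ups (take m H) = downs (take m H)" using s m by (simp add: endpt0)
      have "ups (take m H) + ups (drop m H) = n" "downs (take m H) + downs (drop m H) = n"
        using h ups_simps(3)[of "take m H" "drop m H"] downs_simps(3)[of "take m H" "drop m H"]
        by simp_all
      then have "(take m H, drop m H, []) \<in> R n" using uA
        unfolding R_def T_def by (auto intro!: exI[of _ "ups (take m H)"] exI[of _ "ups (drop m H)"])
      moreover have "r (take m H, drop m H, []) = z" using z m by (simp add: r_def)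
      ultimately show "z \<in> r ` R n" by (metis image_eqI)
    qed
  qed
qed

end
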